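(* Let $n\ge3$ and $3\le j\le n$ be integers and let $\alpha\in I_{j,n}$. Then the coefficient $c^{(n)}_\alpha$ is non-negative if $j$ is even and non-positive if $j$ is odd.
   Context: Let $T_1,T_2,\dots$ be indeterminates, $T_\alpha=T_{\alpha_1}\cdots T_{\alpha_d}$. Define linear operators $L,H$ on monomials (constants sent to $0$): $L(T_{\alpha_1}\cdots T_{\alpha_r})=\sum_{1\le i<j\le r}T_{\alpha_1}\cdots T_{\alpha_i+1}\cdots T_{\alpha_j+1}\cdots T_{\alpha_r}$, $H(T_{\alpha_1}\cdots T_{\alpha_r})=-\frac12\sum_{k=1}^{r}\sum_{l=1}^{\alpha_k-1}\binom{\alpha_k}{l}T_{1+l}T_{1+\alpha_k-l}\prod_{i\ne k}T_{\alpha_i}$. For $n\ge2$ let $A_n=-\sum_{k=1}^{n-1}\binom{n}{k}T_{1+k}T_{1+n-k}T_n$; set $R_2=0$, $R_{n+1}=A_n+L(R_n)+H(R_n)$. $I_{j,n}$ is the set of non-increasing $j$-tuples of integers in $\{2,\dots,n-1\}$ with sum $2n$, and $c^{(n)}_\alpha$ is the coefficient of the monomial $T_\alpha$ in $R_n$. *)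

theory Defs
  imports Complex_Main "HOL-Library.Multiset"
begin

text \<open>Polynomials in the indeterminates T_1, T_2, ... with rational coefficients are
represented as formal sums: lists of (coefficient, monomial) pairs, where a monomial
T_{a_1} ... T_{a_r} is represented by the list [a_1, ..., a_r]. Monomials are commutative,
so the coefficient of T_alpha is the sum of coefficients of all terms whose monomial
has the same multiset of indices as alpha.\<close>

type_synonym tpoly = "(rat \<times> nat list) list"

definition L_mono :: "nat list \<Rightarrow> nat list list" where
  "L_mono xs = concat (map (\<lambda>i. map (\<lambda>j. xs[i := xs ! i + 1, j := xs ! j + 1])
                                   [Suc i..<length xs]) [0..<length xs])"

definition L_op :: "tpoly \<Rightarrow> tpoly" where
  "L_op p = concat (map (\<lambda>(c, xs). map (\<lambda>ys. (c, ys)) (L_mono xs)) p)"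

definition H_mono :: "nat list \<Rightarrow> (rat \<times> nat list) list" where
  "H_mono xs = concat (map (\<lambda>k. map (\<lambda>l. (- (1/2) * of_nat ((xs ! k) choose l),
                       (1 + l) # (1 + xs ! k - l) # (take k xs @ drop (Suc k) xs)))
                     [1..<xs ! k]) [0..<length xs])"

definition H_op :: "tpoly \<Rightarrow> tpoly" where
  "H_op p = concat (map (\<lambda>(c, xs). map (\<lambda>(d, ys). (c * d, ys)) (H_mono xs)) p)"

definition A_poly :: "nat \<Rightarrow> tpoly" where
  "A_poly n = map (\<lambda>k. (- of_nat (n choose k), [1 + k, 1 + n - k, n])) [1..<n]"

text \<open>R 2 = 0 and R (n+1) = A n + L (R n) + H (R n) for n >= 2; R 0, R 1 are unused (set to 0).\<close>
primrec R_poly :: "nat \<Rightarrow> tpoly" where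
  "R_poly 0 = []"
| "R_poly (Suc n) = (if n < 2 then [] else A_poly n @ L_op (R_poly n) @ H_op (R_poly n))"

definition coeffR :: "nat \<Rightarrow> nat list \<Rightarrow> rat" where
  "coeffR n \<alpha> = sum_list (map fst (filter (\<lambda>(c, xs). mset xs = mset \<alpha>) (R_poly n)))"

definition I_set :: "nat \<Rightarrow> nat \<Rightarrow> nat list set" where
  "I_set j n = {\<alpha>. length \<alpha> = j \<and> sorted_wrt (\<ge>) \<alpha> \<and> set \<alpha> \<subseteq> {2..n-1} \<and> sum_list \<alpha> = 2 * n}"

end

theory Submission
  imports Defs
begin

definition good :: "rat \<times> nat list \<Rightarrow> bool" where
  "good p = ((even (length (snd p)) \<longrightarrow> fst p \<ge> 0) \<and> (odd (length (snd p)) \<longrightarrow> fst p \<le> 0))"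

lemma L_mono_len: "ys \<in> set (L_mono xs) \<Longrightarrow> length ys = length xs"
  unfolding L_mono_def by auto

lemma H_mono_prop: "(d, ys) \<in> set (H_mono xs) \<Longrightarrow> length ys = Suc (length xs) \<and> d \<le> 0"
  unfolding H_mono_def by auto

lemma L_good: "\<forall>p\<in>set q. good p \<Longrightarrow> \<forall>p\<in>set (L_op q). good p"
proof
  fix p assume "\<forall>p\<in>set q. good p" "p \<in> set (L_op q)"
  then obtain c xs ys where "(c, xs) \<in> set q" "ys \<in> set (L_mono xs)" "p = (c, ys)"
    and "good (c, xs)" unfolding L_op_def by auto
  then show "good p" using L_mono_len by (simp add: good_def)
qed

lemma H_good:
  assumes "\<forall>p\<in>set q. good p" shows "\<forall>p\<in>set (H_op q). good p"
proof
  fix p assume "p \<in> set (H_op q)"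
  then obtain c xs d ys where cx: "(c, xs) \<in> set q" and dy: "(d, ys) \<in> set (H_mono xs)"
    and p: "p = (c * d, ys)"
    unfolding H_op_def by auto
  from H_mono_prop[OF dy] have l: "length ys = Suc (length xs)" and d: "d \<le> 0" by auto
  from assms cx have g: "good (c, xs)" by auto
  show "good p"
  proof (cases "even (length xs)")
    case True
    with g have "c \<ge> 0" by (simp add: good_def)
    with d have "c * d \<le> 0" by (simp add: mult_nonneg_nonpos)
    with True l p show ?thesis by (simp add: good_def)
  next
    case False
    with g have "c \<le> 0" by (simp add: good_def)
    with d have "c * d \<ge> 0" by (simp add: zero_le_mult_iff)
    with False l p show ?thesis by (simp add: good_def)
  qed
qed

lemma A_good: "\<forall>p\<in>set (A_poly n). good p"
  unfolding A_poly_def good_def by auto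

lemma R_good: "\<forall>p\<in>set (R_poly n). good p"
  by (induction n) (auto simp: A_good dest: L_good H_good)

lemma sum_nonpos: "\<forall>x\<in>set xs. (x::rat) \<le> 0 \<Longrightarrow> sum_list xs \<le> 0"
  by (induction xs) auto

theorem mainTheorem10:
  fixes n j :: nat and \<alpha> :: "nat list"
  assumes "n \<ge> 3" and "3 \<le> j" and "j \<le> n" and "\<alpha> \<in> I_set j n"
  shows "(even j \<longrightarrow> coeffR n \<alpha> \<ge> 0) \<and> (odd j \<longrightarrow> coeffR n \<alpha> \<le> 0)"
proof -
  have la: "length \<alpha> = j" using assms(4) by (simp add: I_set_def)
  have key: "\<And>c xs. (c, xs) \<in> set (filter (\<lambda>(c, xs). mset xs = mset \<alpha>) (R_poly n))
     \<Longrightarrow> good (c, xs) \<and> length xs = j"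
  proof -
    fix c xs assume h: "(c, xs) \<in> set (filter (\<lambda>(c, xs). mset xs = mset \<alpha>) (R_poly n))"
    then have "mset xs = mset \<alpha>" by auto
    then have "length xs = j" using la by (metis size_mset)
    with h R_good show "good (c, xs) \<and> length xs = j" by auto
  qed
  have key2: "\<And>x. x \<in> set (map fst (filter (\<lambda>(c, xs). mset xs = mset \<alpha>) (R_poly n)))
     \<Longrightarrow> (even j \<longrightarrow> x \<ge> 0) \<and> (odd j \<longrightarrow> x \<le> 0)"
  proof -
    fix x assume "x \<in> set (map fst (filter (\<lambda>(c, xs). mset xs = mset \<alpha>) (R_poly n)))"
    then obtain xs where "(x, xs) \<in> set (filter (\<lambda>(c, xs). mset xs = mset \<alpha>) (R_poly n))"
      by auto
    from key[OF this] show "(even j \<longrightarrow> x \<ge> 0) \<and> (odd j \<longrightarrow> x \<le> 0)"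
      by (simp add: good_def)
  qed
  show ?thesis unfolding coeffR_def
    using key2 by (auto intro!: sum_list_nonneg sum_nonpos)
qed

end
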